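(* Let $\mathbb{M}$ be a flow monoid with idempotent addition, and let $h_1,h_2$ be flow graphs with the same node set $X$ whose edge functions are continuous and distributive. Then $\mathsf{tf}(h_1)=\mathsf{tf}(h_2)$ if and only if path replacement of $h_1$ by $h_2$ and path replacement of $h_2$ by $h_1$ both hold.
   Context: A flow monoid is a commutative monoid $(\mathbb{M},+,0)$ such that $n\le m :\iff \exists o.\ m=n+o$ is a partial order in which every ascending chain $K$ has a least upper bound $\bigsqcup K$, and $n+\bigsqcup K=\bigsqcup(n+K)$. Addition is idempotent if $m+m=m$. A function is continuous if it commutes with least upper bounds of ascending chains, and distributive if $f(m+n)=f(m)+f(n)$ and $f(0)=0$. Infinite sums denote least upper bounds of finite partial sums; sums and $\le$ on functions are pointwise. A flow graph is $h=(X,E,\mathit{in})$ with $X\subseteq\mathbb{N}$ finite, $E:X\times\mathbb{N}\to$ continuous functions $\mathbb{M}\to\mathbb{M}$, $\mathit{in}:(\mathbb{N}\setminus X)\times X\to\mathbb{M}$; $\mathit{in}_x=\sum_{y\notin X}\mathit{in}(y,x)$; the flow is the least $\mathit{flow}:X\to\mathbb{M}$ with $\mathit{flow}(x)=\mathit{in}_x+\sum_{y\in X}E(y,x)(\mathit{flow}(y))$; outflow $\mathit{out}(x,y)=E(x,y)(\mathit{flow}(x))$. The transfer function $\mathsf{tf}(h)$ maps each inflow $\mathit{in}'$ to the outflow of $(X,E,\mathit{in}')$; $\mathsf{tf}(h_1)=\mathsf{tf}(h_2)$ means equality for all inflows. A path through $h$ is $p=x_0\cdots x_nz$ with $x_i\in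 X$, $z\in\mathbb{N}\setminus X$; $\mathrm{Paths}_h(x\to(y,z))$ is the set of such paths with $x_0=x$, $x_n=y$, final element $z$; $E_p=E(x_n,z)\circ\cdots\circ E(x_0,x_1)$; $E_P=\sum_{q\in P}E_q$. $\mathrm{Out}(h_1,h_2)=\{x\in X\mid\exists z.\ h_1.E(x,z)\neq h_2.E(x,z)\}$. Path replacement of $h_1$ by $h_2$: for every $x\in\mathrm{Out}(h_1,h_2)$, $y\in X$, $z\in\mathbb{N}\setminus X$ and every $p\in\mathrm{Paths}_{h_1}(x\to(y,z))$ there is $P\subseteq\mathrm{Paths}_{h_2}(x\to(y,z))$ with $E_p\le E_P$. *)

theory Defs
  imports Main
begin

definition is_lub :: "'a::order set \<Rightarrow> 'a \<Rightarrow> bool" where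
  "is_lub K u \<longleftrightarrow> (\<forall>k\<in>K. k \<le> u) \<and> (\<forall>v. (\<forall>k\<in>K. k \<le> v) \<longrightarrow> u \<le> v)"

definition flub :: "'a::order set \<Rightarrow> 'a" where
  "flub K = (THE u. is_lub K u)"

text \<open>Ascending chains are monotone sequences.\<close>

definition flow_monoid :: "'a::canonically_ordered_monoid_add itself \<Rightarrow> bool" where
  "flow_monoid _ \<longleftrightarrow>
     (\<forall>c :: nat \<Rightarrow> 'a. mono c \<longrightarrow> (\<exists>u. is_lub (range c) u)) \<and>
     (\<forall>(c :: nat \<Rightarrow> 'a) n. mono c \<longrightarrow> n + flub (range c) = flub (range (\<lambda>i. n + c i)))"

definition fm_continuous :: "('a::canonically_ordered_monoid_add \<Rightarrow> 'a) \<Rightarrow> bool" where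
  "fm_continuous f \<longleftrightarrow> (\<forall>c :: nat \<Rightarrow> 'a. mono c \<longrightarrow> f (flub (range c)) = flub (range (\<lambda>i. f (c i))))"

definition fm_distributive :: "('a::canonically_ordered_monoid_add \<Rightarrow> 'a) \<Rightarrow> bool" where
  "fm_distributive f \<longleftrightarrow> (\<forall>m n. f (m + n) = f m + f n) \<and> f 0 = 0"

definition isum :: "('b \<Rightarrow> 'a::canonically_ordered_monoid_add) \<Rightarrow> 'b set \<Rightarrow> 'a" where
  "isum f A = flub {sum f F | F. finite F \<and> F \<subseteq> A}"

record 'a flow_graph =
  nodes :: "nat set"
  edge :: "nat \<Rightarrow> nat \<Rightarrow> 'a \<Rightarrow> 'a"
  inflow :: "nat \<Rightarrow> nat \<Rightarrow> 'a"

definition is_flow_graph :: "'a::canonically_ordered_monoid_add flow_graph \<Rightarrow> bool" where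
  "is_flow_graph h \<longleftrightarrow> finite (nodes h) \<and> (\<forall>x\<in>nodes h. \<forall>z. fm_continuous (edge h x z))"

definition inflow_at :: "'a::canonically_ordered_monoid_add flow_graph \<Rightarrow> nat \<Rightarrow> 'a" where
  "inflow_at h x = isum (\<lambda>y. inflow h y x) (- nodes h)"

definition flow_eq :: "'a::canonically_ordered_monoid_add flow_graph \<Rightarrow> (nat \<Rightarrow> 'a) \<Rightarrow> bool" where
  "flow_eq h f \<longleftrightarrow>
     (\<forall>x\<in>nodes h. f x = inflow_at h x + (\<Sum>y\<in>nodes h. edge h y x (f y))) \<and>
     (\<forall>x. x \<notin> nodes h \<longrightarrow> f x = 0)"

definition flow :: "'a::canonically_ordered_monoid_add flow_graph \<Rightarrow> nat \<Rightarrow> 'a" where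
  "flow h = (THE f. flow_eq h f \<and> (\<forall>g. flow_eq h g \<longrightarrow> (\<forall>x\<in>nodes h. f x \<le> g x)))"

definition outflow :: "'a::canonically_ordered_monoid_add flow_graph \<Rightarrow> nat \<Rightarrow> nat \<Rightarrow> 'a" where
  "outflow h x z = (if x \<in> nodes h \<and> z \<notin> nodes h then edge h x z (flow h x) else 0)"

definition tf :: "'a::canonically_ordered_monoid_add flow_graph \<Rightarrow> (nat \<Rightarrow> nat \<Rightarrow> 'a) \<Rightarrow> nat \<Rightarrow> nat \<Rightarrow> 'a" where
  "tf h = (\<lambda>inn. outflow (h\<lparr>inflow := inn\<rparr>))"

text \<open>A path x0 ... xn z is represented as the pair ([x0,...,xn], z).\<close>
definition paths :: "'a flow_graph \<Rightarrow> nat \<Rightarrow> nat \<Rightarrow> nat \<Rightarrow> (nat list \<times> nat) set" where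
  "paths h x y z = {(xs, z) | xs. xs \<noteq> [] \<and> set xs \<subseteq> nodes h \<and> hd xs = x \<and> last xs = y \<and> z \<notin> nodes h}"

fun ecomp :: "(nat \<Rightarrow> nat \<Rightarrow> 'a \<Rightarrow> 'a) \<Rightarrow> nat list \<Rightarrow> nat \<Rightarrow> 'a \<Rightarrow> 'a" where
  "ecomp E [] z = id"
| "ecomp E [x] z = E x z"
| "ecomp E (x # y # ys) z = ecomp E (y # ys) z \<circ> E x y"

definition epath :: "'a flow_graph \<Rightarrow> nat list \<times> nat \<Rightarrow> 'a \<Rightarrow> 'a" where
  "epath h p = ecomp (edge h) (fst p) (snd p)"

definition epaths :: "'a::canonically_ordered_monoid_add flow_graph \<Rightarrow> (nat list \<times> nat) set \<Rightarrow> 'a \<Rightarrow> 'a" where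
  "epaths h P = (\<lambda>m. isum (\<lambda>q. epath h q m) P)"

definition Out :: "'a flow_graph \<Rightarrow> 'a flow_graph \<Rightarrow> nat set" where
  "Out h1 h2 = {x \<in> nodes h1. \<exists>z. edge h1 x z \<noteq> edge h2 x z}"

definition path_replacement :: "'a::canonically_ordered_monoid_add flow_graph \<Rightarrow> 'a flow_graph \<Rightarrow> bool" where
  "path_replacement h1 h2 \<longleftrightarrow>
     (\<forall>x\<in>Out h1 h2. \<forall>y\<in>nodes h1. \<forall>z. z \<notin> nodes h1 \<longrightarrow>
        (\<forall>p\<in>paths h1 x y z. \<exists>P. P \<subseteq> paths h2 x y z \<and>
            (\<forall>m. epath h1 p m \<le> epaths h2 P m)))"

end

theory Submission
  imports Defs "HOL-Library.Countable"
begin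

lemma le_addR: "(a::'a::canonically_ordered_monoid_add) \<le> a + b"
  by (auto simp: le_iff_add)
lemma le_addL: "(b::'a::canonically_ordered_monoid_add) \<le> a + b"
  by (metis le_addR add.commute)

lemma dist_mono: "fm_distributive f \<Longrightarrow> (a::'a::canonically_ordered_monoid_add) \<le> b \<Longrightarrow> f a \<le> f b"
  unfolding fm_distributive_def by (auto simp: le_iff_add)

lemma dist_zero: "fm_distributive f \<Longrightarrow> f 0 = 0"
  unfolding fm_distributive_def by auto

lemma dist_add: "fm_distributive f \<Longrightarrow> f (a + b) = f a + f b"
  unfolding fm_distributive_def by auto

lemma dist_sum: assumes d: "fm_distributive f" and fS: "finite S"
  shows "f (sum g S) = (\<Sum>i\<in>S. f (g i))"
  using fS
proof (induction S rule: finite_induct)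
  case empty then show ?case by (simp add: dist_zero[OF d])
next
  case (insert x F) then show ?case by (simp add: dist_add[OF d])
qed

lemma mono_comp_dist: "fm_distributive f \<Longrightarrow> mono c \<Longrightarrow> mono (\<lambda>i. f (c i))"
  by (simp add: mono_def dist_mono)

lemma ecomp_dist:
  "(\<forall>x\<in>set ys. \<forall>z. fm_distributive (E x z)) \<Longrightarrow> fm_distributive (ecomp E ys z)"
  by (induction E ys z rule: ecomp.induct) (auto simp: fm_distributive_def)

lemma ecomp_cont:
  "(\<forall>x\<in>set ys. \<forall>z. fm_continuous (E x z) \<and> fm_distributive (E x z)) \<Longrightarrow> fm_continuous (ecomp E ys z)"
proof (induction E ys z rule: ecomp.induct)
  case (1 E z)
  then show ?case by (simp add: fm_continuous_def)
next
  case (2 E x z)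
  then show ?case by simp
next
  case (3 E x y ys z)
  then have f: "fm_continuous (ecomp E (y # ys) z)" and g: "fm_continuous (E x y)"
    and gd: "fm_distributive (E x y)" by auto
  show ?case unfolding fm_continuous_def
  proof (intro allI impI)
    fix c :: "nat \<Rightarrow> 'a" assume mc: "mono c"
    have "(ecomp E (y # ys) z \<circ> E x y) (flub (range c)) = ecomp E (y # ys) z (flub (range (\<lambda>i. E x y (c i))))"
      using g mc unfolding fm_continuous_def by simp
    also have "\<dots> = flub (range (\<lambda>i. ecomp E (y # ys) z (E x y (c i))))"
      using f mono_comp_dist[OF gd mc] unfolding fm_continuous_def by simp
    finally show "ecomp E (x # y # ys) z (flub (range c)) = flub (range (\<lambda>i. ecomp E (x # y # ys) z (c i)))"
      by simp
  qed
qed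

locale FG =
  fixes h :: "'a::canonically_ordered_monoid_add flow_graph"
  assumes fm: "flow_monoid TYPE('a)"
    and idem: "\<And>m::'a. m + m = m"
    and fg: "is_flow_graph h"
    and dist: "\<forall>x\<in>nodes h. \<forall>z. fm_distributive (edge h x z)"
begin

lemma FG_upd: "FG (h\<lparr>inflow := inn\<rparr>)"
  unfolding FG_def using fm idem fg dist by (simp add: is_flow_graph_def)

lemma lub_unique: "is_lub K u \<Longrightarrow> is_lub K v \<Longrightarrow> u = (v::'a)"
  unfolding is_lub_def by (meson antisym)

lemma flub_eq: "is_lub K u \<Longrightarrow> flub K = (u::'a)"
  unfolding flub_def by (rule the_equality) (auto dest: lub_unique)

lemma chain_lub: "mono (c::nat \<Rightarrow> 'a) \<Longrightarrow> is_lub (range c) (flub (range c))"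
  using fm unfolding flow_monoid_def by (metis flub_eq)

lemma le_flub: "mono (c::nat \<Rightarrow> 'a) \<Longrightarrow> c n \<le> flub (range c)"
  using chain_lub unfolding is_lub_def by blast

lemma flub_le: "mono (c::nat \<Rightarrow> 'a) \<Longrightarrow> (\<And>n. c n \<le> v) \<Longrightarrow> flub (range c) \<le> v"
  using chain_lub unfolding is_lub_def by blast

lemma add_flub: "mono (c::nat \<Rightarrow> 'a) \<Longrightarrow> n + flub (range c) = flub (range (\<lambda>i. n + c i))"
  using fm unfolding flow_monoid_def by blast

lemma join_le: "a \<le> v \<Longrightarrow> b \<le> v \<Longrightarrow> a + b \<le> (v::'a)"
proof -
  assume "a \<le> v" "b \<le> v"
  then obtain c d where e: "v = a + c" "v = b + d" unfolding le_iff_add by blast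
  have "(a + c) + (b + d) = v" using idem[of v] e by metis
  then have "(a + b) + (c + d) = v" by (simp add: ac_simps)
  then show ?thesis by (metis le_addR)
qed

lemma sum_le_bound: "finite S \<Longrightarrow> (\<And>i. i \<in> S \<Longrightarrow> f i \<le> v) \<Longrightarrow> sum f S \<le> (v::'a)"
  by (induction S rule: finite_induct) (auto intro: join_le)

lemma flub_add2:
  assumes ma: "mono (a::nat \<Rightarrow> 'a)" and mb: "mono b"
  shows "flub (range (\<lambda>n. a n + b n)) = flub (range a) + flub (range b)"
proof -
  have mab: "mono (\<lambda>n. a n + b n)" using ma mb by (simp add: mono_def add_mono)
  show ?thesis
  proof (rule antisym)
    show "flub (range (\<lambda>n. a n + b n)) \<le> flub (range a) + flub (range b)"
      by (rule flub_le[OF mab]) (intro add_mono le_flub ma mb)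
  next
    have "flub (range a) + flub (range b) = flub (range (\<lambda>i. flub (range a) + b i))"
      using add_flub[OF mb] .
    also have "\<dots> \<le> flub (range (\<lambda>n. a n + b n))"
    proof (rule flub_le)
      show "mono (\<lambda>i. flub (range a) + b i)" using mb by (simp add: mono_def add_left_mono)
      fix i
      have "flub (range a) + b i = b i + flub (range a)" by (simp add: add.commute)
      also have "\<dots> = flub (range (\<lambda>j. b i + a j))" using add_flub[OF ma] .
      also have "\<dots> \<le> flub (range (\<lambda>n. a n + b n))"
      proof (rule flub_le)
        show "mono (\<lambda>j. b i + a j)" using ma by (simp add: mono_def add_left_mono)
        fix j
        have "b i + a j \<le> a (max i j) + b (max i j)"
          using ma mb by (metis add.commute add_mono max.cobounded1 max.cobounded2 monoD)
        also have "\<dots> \<le> flub (range (\<lambda>n. a n + b n))" using le_flub[OF mab, of "max i j"] by simp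
        finally show "b i + a j \<le> flub (range (\<lambda>n. a n + b n))" .
      qed
      finally show "flub (range a) + b i \<le> flub (range (\<lambda>n. a n + b n))" .
    qed
    finally show "flub (range a) + flub (range b) \<le> flub (range (\<lambda>n. a n + b n))" .
  qed
qed

lemma flub_single: "flub {k} = (k::'a)"
  by (rule flub_eq) (simp add: is_lub_def)

lemma flub_const: "flub (range (\<lambda>n::nat. k)) = (k::'a)"
proof -
  have "range (\<lambda>n::nat. k) = {k}" by auto
  moreover have "is_lub {k} k" by (simp add: is_lub_def)
  ultimately show ?thesis using flub_eq by simp
qed

lemma flub_sum:
  "finite S \<Longrightarrow> (\<And>y. y \<in> S \<Longrightarrow> mono (c y :: nat \<Rightarrow> 'a)) \<Longrightarrow>
    mono (\<lambda>n. \<Sum>y\<in>S. c y n) \<and> flub (range (\<lambda>n. \<Sum>y\<in>S. c y n)) = (\<Sum>y\<in>S. flub (range (c y)))"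
proof (induction S rule: finite_induct)
  case empty
  then show ?case by (simp add: mono_def flub_single)
next
  case (insert x F)
  then have m1: "mono (c x)" and IH: "mono (\<lambda>n. \<Sum>y\<in>F. c y n)"
    "flub (range (\<lambda>n. \<Sum>y\<in>F. c y n)) = (\<Sum>y\<in>F. flub (range (c y)))" by auto
  have "mono (\<lambda>n. c x n + (\<Sum>y\<in>F. c y n))" using m1 IH(1) by (simp add: mono_def add_mono)
  moreover have "flub (range (\<lambda>n. c x n + (\<Sum>y\<in>F. c y n))) = flub (range (c x)) + (\<Sum>y\<in>F. flub (range (c y)))"
    using flub_add2[OF m1 IH(1)] IH(2) by simp
  ultimately show ?case using insert by simp
qed

lemma flub_shift: "mono (c::nat \<Rightarrow> 'a) \<Longrightarrow> flub (range (\<lambda>n. c (Suc n))) = flub (range c)"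
proof -
  assume mc: "mono c"
  have ms: "mono (\<lambda>n. c (Suc n))" using mc by (simp add: mono_def)
  show ?thesis
  proof (rule antisym)
    show "flub (range (\<lambda>n. c (Suc n))) \<le> flub (range c)"
      by (rule flub_le[OF ms]) (rule le_flub[OF mc])
    show "flub (range c) \<le> flub (range (\<lambda>n. c (Suc n)))"
    proof (rule flub_le[OF mc])
      fix n
      have "c n \<le> c (Suc n)" using mc by (simp add: monoD)
      also have "\<dots> \<le> flub (range (\<lambda>n. c (Suc n)))" using le_flub[OF ms, of n] by simp
      finally show "c n \<le> flub (range (\<lambda>n. c (Suc n)))" .
    qed
  qed
qed

lemma isum_lub: "is_lub {sum g F | F. finite F \<and> F \<subseteq> (A::'b::countable set)} (isum g A :: 'a)"
proof -
  define c where "c n = sum g {a\<in>A. to_nat a < n}" for n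
  have fin: "finite {a\<in>A. to_nat a < n}" for n
  proof (rule finite_subset)
    show "{a\<in>A. to_nat a < n} \<subseteq> to_nat -` {..<n}" by auto
    show "finite (to_nat -` {..<n})" by (rule finite_vimageI) auto
  qed
  have mc: "mono c" unfolding mono_def c_def
    by (auto intro!: sum_mono2 fin)
  define S where "S = {sum g F | F. finite F \<and> F \<subseteq> A}"
  have "is_lub S (flub (range c))"
    unfolding is_lub_def
  proof (intro conjI ballI allI impI)
    fix k assume "k \<in> S"
    then obtain F where F: "k = sum g F" "finite F" "F \<subseteq> A" unfolding S_def by auto
    define n where "n = Suc (Max (to_nat ` F))"
    have "F \<subseteq> {a\<in>A. to_nat a < n}"
      using F by (auto simp: n_def le_imp_less_Suc)
    then have "sum g F \<le> c n" unfolding c_def by (intro sum_mono2 fin) auto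
    then show "k \<le> flub (range c)" using F le_flub[OF mc, of n] by simp
  next
    fix v assume "\<forall>k\<in>S. k \<le> v"
    moreover have "c n \<in> S" for n unfolding S_def c_def using fin by blast
    ultimately show "flub (range c) \<le> v" by (intro flub_le[OF mc]) auto
  qed
  then have "isum g A = flub (range c)" unfolding isum_def S_def by (rule flub_eq)
  with \<open>is_lub S _\<close> show ?thesis unfolding S_def by simp
qed

lemma le_isum: "a \<in> A \<Longrightarrow> g a \<le> (isum g (A::'b::countable set) :: 'a)"
proof -
  assume a: "a \<in> A"
  have "sum g {a} \<in> {sum g F | F. finite F \<and> F \<subseteq> A}" using a by blast
  then show ?thesis using isum_lub[of g A] unfolding is_lub_def by simp
qed

lemma isum_le: "(\<And>a. a \<in> A \<Longrightarrow> g a \<le> v) \<Longrightarrow> isum g (A::'b::countable set) \<le> (v::'a)"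
proof -
  assume H: "\<And>a. a \<in> A \<Longrightarrow> g a \<le> v"
  have "\<forall>k\<in>{sum g F | F. finite F \<and> F \<subseteq> A}. k \<le> v"
    using H by (auto intro!: sum_le_bound)
  then show ?thesis using isum_lub[of g A] unfolding is_lub_def by blast
qed

lemma edge_dist: "x \<in> nodes h \<Longrightarrow> fm_distributive (edge h x z)"
  using dist by blast

lemma edge_cont: "x \<in> nodes h \<Longrightarrow> fm_continuous (edge h x z)"
  using fg unfolding is_flow_graph_def by blast

lemma fin_nodes: "finite (nodes h)"
  using fg unfolding is_flow_graph_def by blast

lemma ecomp_dist_h: "set ys \<subseteq> nodes h \<Longrightarrow> fm_distributive (ecomp (edge h) ys z)"
  by (rule ecomp_dist) (auto intro: edge_dist)

lemma ecomp_cont_h: "set ys \<subseteq> nodes h \<Longrightarrow> fm_continuous (ecomp (edge h) ys z)"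
  by (rule ecomp_cont) (auto intro: edge_dist edge_cont)

definition Fop :: "(nat \<Rightarrow> 'a) \<Rightarrow> nat \<Rightarrow> 'a" where
  "Fop g = (\<lambda>x. if x \<in> nodes h then inflow_at h x + (\<Sum>y\<in>nodes h. edge h y x (g y)) else 0)"

definition it :: "nat \<Rightarrow> nat \<Rightarrow> 'a" where
  "it n = (Fop ^^ n) (\<lambda>_. 0)"

definition fw :: "nat \<Rightarrow> 'a" where
  "fw x = flub (range (\<lambda>n. it n x))"

lemma it_Suc: "it (Suc n) = Fop (it n)" by (simp add: it_def)
lemma it_0: "it 0 = (\<lambda>_. 0)" by (simp add: it_def)

lemma Fop_mono: "(\<And>y. g y \<le> g' y) \<Longrightarrow> Fop g x \<le> Fop g' x"
  unfolding Fop_def by (auto intro!: add_left_mono sum_mono dist_mono[OF edge_dist])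

lemma it_step: "it n x \<le> it (Suc n) x"
proof (induction n arbitrary: x)
  case 0 then show ?case by (simp add: it_0)
next
  case (Suc n)
  show ?case unfolding it_Suc[of "Suc n"] it_Suc[of n] by (rule Fop_mono) (use Suc in \<open>simp add: it_Suc\<close>)
qed

lemma it_chain: "mono (\<lambda>n. it n x)"
  by (simp add: mono_iff_le_Suc it_step)

lemma it_out: "x \<notin> nodes h \<Longrightarrow> it n x = 0"
  by (cases n) (auto simp: it_0 it_Suc Fop_def)

lemma fw_eq: "flow_eq h fw"
  unfolding flow_eq_def
proof (intro conjI ballI allI impI)
  fix x assume x: "x \<in> nodes h"
  have mc: "\<And>y. y \<in> nodes h \<Longrightarrow> mono (\<lambda>n. edge h y x (it n y))"
    by (rule mono_comp_dist[OF edge_dist it_chain])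
  note fs = flub_sum[OF fin_nodes, of "\<lambda>y n. edge h y x (it n y)", OF mc]
  have "fw x = flub (range (\<lambda>n. it (Suc n) x))"
    unfolding fw_def by (rule flub_shift[OF it_chain, symmetric])
  also have "\<dots> = flub (range (\<lambda>n. inflow_at h x + (\<Sum>y\<in>nodes h. edge h y x (it n y))))"
    using x by (simp add: it_Suc Fop_def)
  also have "\<dots> = inflow_at h x + flub (range (\<lambda>n. \<Sum>y\<in>nodes h. edge h y x (it n y)))"
    using add_flub[OF conjunct1[OF fs]] by simp
  also have "\<dots> = inflow_at h x + (\<Sum>y\<in>nodes h. flub (range (\<lambda>n. edge h y x (it n y))))"
    using conjunct2[OF fs] by simp
  also have "\<dots> = inflow_at h x + (\<Sum>y\<in>nodes h. edge h y x (fw y))"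
  proof -
    have "\<And>y. y \<in> nodes h \<Longrightarrow> flub (range (\<lambda>n. edge h y x (it n y))) = edge h y x (fw y)"
      using edge_cont it_chain unfolding fm_continuous_def fw_def by metis
    then show ?thesis by simp
  qed
  finally show "fw x = inflow_at h x + (\<Sum>y\<in>nodes h. edge h y x (fw y))" .
next
  fix x assume "x \<notin> nodes h"
  then show "fw x = 0" unfolding fw_def using it_out flub_const by simp
qed

lemma fw_least: assumes g: "flow_eq h g" shows "fw x \<le> g x"
proof -
  have "it n y \<le> g y" for n y
  proof (induction n arbitrary: y)
    case 0 then show ?case by (simp add: it_0)
  next
    case (Suc n)
    have "Fop (it n) y \<le> Fop g y" by (rule Fop_mono) (rule Suc)
    also have "Fop g y = g y" using g unfolding flow_eq_def Fop_def by auto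
    finally show ?case by (simp add: it_Suc)
  qed
  then show ?thesis unfolding fw_def by (intro flub_le it_chain)
qed

lemma flow_is_fw: "flow h = fw"
  unfolding flow_def
proof (rule the_equality)
  show "flow_eq h fw \<and> (\<forall>g. flow_eq h g \<longrightarrow> (\<forall>x\<in>nodes h. fw x \<le> g x))"
    using fw_eq fw_least by blast
next
  fix f assume f: "flow_eq h f \<and> (\<forall>g. flow_eq h g \<longrightarrow> (\<forall>x\<in>nodes h. f x \<le> g x))"
  show "f = fw"
  proof
    fix x show "f x = fw x"
    proof (cases "x \<in> nodes h")
      case True
      then show ?thesis using f fw_eq fw_least by (meson antisym)
    next
      case False
      then show ?thesis using f fw_eq unfolding flow_eq_def by auto
    qed
  qed
qed

lemma flow_eqn: "x \<in> nodes h \<Longrightarrow> flow h x = inflow_at h x + (\<Sum>y\<in>nodes h. edge h y x (flow h y))"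
  using fw_eq unfolding flow_is_fw flow_eq_def by blast

lemma inflow_le_flow: "x \<in> nodes h \<Longrightarrow> inflow_at h x \<le> flow h x"
  using flow_eqn by (metis le_addR)

lemma edge_le_flow: assumes x: "x \<in> nodes h" and y: "y \<in> nodes h" and a: "a \<le> flow h x"
  shows "edge h x y a \<le> flow h y"
proof -
  have "edge h x y a \<le> edge h x y (flow h x)" by (rule dist_mono[OF edge_dist[OF x] a])
  also have "\<dots> \<le> (\<Sum>y'\<in>nodes h. edge h y' y (flow h y'))"
    using sum.remove[OF fin_nodes x, of "\<lambda>y'. edge h y' y (flow h y')"] by (metis le_addR)
  also have "\<dots> \<le> flow h y" using flow_eqn[OF y] by (metis le_addL)
  finally show ?thesis .
qed

lemma walk_le_outflow:
  "ys \<noteq> [] \<Longrightarrow> set ys \<subseteq> nodes h \<Longrightarrow> z \<notin> nodes h \<Longrightarrow> a \<le> flow h (hd ys) \<Longrightarrow>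
    ecomp (edge h) ys z a \<le> outflow h (last ys) z"
proof (induction ys arbitrary: a)
  case Nil then show ?case by simp
next
  case (Cons x ys)
  show ?case
  proof (cases ys)
    case Nil
    then show ?thesis using Cons.prems dist_mono[OF edge_dist] by (simp add: outflow_def)
  next
    case (Cons y rest)
    have "edge h x y a \<le> flow h y"
      using Cons.prems \<open>ys = y # rest\<close> by (intro edge_le_flow) auto
    then have "ecomp (edge h) ys z (edge h x y a) \<le> outflow h (last ys) z"
      using Cons.IH Cons.prems \<open>ys = y # rest\<close> by simp
    then show ?thesis using \<open>ys = y # rest\<close> by simp
  qed
qed

definition Good :: "(nat \<Rightarrow> nat \<Rightarrow> 'a) \<Rightarrow> nat \<Rightarrow> 'a \<Rightarrow> bool" where
  "Good T y a \<longleftrightarrow> (\<forall>ys z. ys \<noteq> [] \<longrightarrow> set ys \<subseteq> nodes h \<longrightarrow> hd ys = y \<longrightarrow> z \<notin> nodes h \<longrightarrow>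
      ecomp (edge h) ys z a \<le> T (last ys) z)"

lemma Good_0: "Good T y 0"
  unfolding Good_def by (auto simp: dist_zero[OF ecomp_dist_h])

lemma Good_add: "Good T y a \<Longrightarrow> Good T y b \<Longrightarrow> Good T y (a + b)"
  unfolding Good_def by (auto simp: dist_add[OF ecomp_dist_h] intro: join_le)

lemma Good_sum: "finite S \<Longrightarrow> (\<And>i. i \<in> S \<Longrightarrow> Good T y (f i)) \<Longrightarrow> Good T y (sum f S)"
  by (induction S rule: finite_induct) (auto intro: Good_add Good_0)

lemma Good_edge: assumes y': "y' \<in> nodes h" and G: "Good T y' a"
  shows "Good T y (edge h y' y a)"
  unfolding Good_def
proof (intro allI impI)
  fix ys z assume ys: "ys \<noteq> []" "set ys \<subseteq> nodes h" "hd ys = y" "z \<notin> nodes h"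
  then obtain rest where r: "ys = y # rest" by (cases ys) auto
  have "ecomp (edge h) (y' # ys) z a \<le> T (last (y' # ys)) z"
    using G[unfolded Good_def, rule_format, of "y' # ys" z] ys y' by simp
  then show "ecomp (edge h) ys z (edge h y' y a) \<le> T (last ys) z" using r by simp
qed

lemma Good_lub: assumes mc: "mono (c::nat \<Rightarrow> 'a)" and G: "\<And>n. Good T y (c n)"
  shows "Good T y (flub (range c))"
  unfolding Good_def
proof (intro allI impI)
  fix ys z assume ys: "ys \<noteq> []" "set ys \<subseteq> nodes h" "hd ys = y" "z \<notin> nodes h"
  have "ecomp (edge h) ys z (flub (range c)) = flub (range (\<lambda>i. ecomp (edge h) ys z (c i)))"
    using ecomp_cont_h[OF ys(2)] mc unfolding fm_continuous_def by blast
  also have "\<dots> \<le> T (last ys) z"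
    by (rule flub_le[OF mono_comp_dist[OF ecomp_dist_h[OF ys(2)] mc]]) (use G ys in \<open>auto simp: Good_def\<close>)
  finally show "ecomp (edge h) ys z (flub (range c)) \<le> T (last ys) z" .
qed

lemma outflow_upper:
  assumes H: "\<And>x ys z. x \<in> nodes h \<Longrightarrow> ys \<noteq> [] \<Longrightarrow> set ys \<subseteq> nodes h \<Longrightarrow> hd ys = x \<Longrightarrow> z \<notin> nodes h \<Longrightarrow>
      ecomp (edge h) ys z (inflow_at h x) \<le> T (last ys) z"
    and y: "y \<in> nodes h" and z: "z \<notin> nodes h"
  shows "outflow h y z \<le> T y z"
proof -
  have GI: "Good T x (inflow_at h x)" if "x \<in> nodes h" for x
    using H that unfolding Good_def by blast
  have "\<forall>y\<in>nodes h. Good T y (it n y)" for n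
  proof (induction n)
    case 0 then show ?case by (simp add: it_0 Good_0)
  next
    case (Suc n)
    show ?case
    proof
      fix y assume y: "y \<in> nodes h"
      have "Good T y (inflow_at h y + (\<Sum>y'\<in>nodes h. edge h y' y (it n y')))"
        by (intro Good_add GI y Good_sum fin_nodes Good_edge) (use Suc in auto)
      then show "Good T y (it (Suc n) y)" using y by (simp add: it_Suc Fop_def)
    qed
  qed
  then have "Good T y (fw y)" unfolding fw_def using y by (intro Good_lub it_chain) auto
  then have "ecomp (edge h) [y] z (fw y) \<le> T (last [y]) z"
    using y z unfolding Good_def by (elim allE[of _ "[y]"] allE[of _ z]) simp
  then show ?thesis using y z by (simp add: outflow_def flow_is_fw)
qed

end


lemma pr_upd: "path_replacement (ha\<lparr>inflow := i\<rparr>) (hb\<lparr>inflow := j\<rparr>) = path_replacement ha hb"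
  by (simp add: path_replacement_def Out_def paths_def epaths_def epath_def)

lemma core:
  assumes FGa: "FG ha" and FGb: "FG hb" and N: "nodes ha = nodes hb"
    and PR: "path_replacement ha hb" and z: "z \<notin> nodes ha"
  shows "ys \<noteq> [] \<Longrightarrow> set ys \<subseteq> nodes ha \<Longrightarrow> a \<le> flow hb (hd ys) \<Longrightarrow>
    ecomp (edge ha) ys z a \<le> outflow hb (last ys) z"
proof (induction ys arbitrary: a)
  case Nil then show ?case by simp
next
  case (Cons x ys)
  have x: "x \<in> nodes ha" using Cons.prems by simp
  show ?case
  proof (cases "x \<in> Out ha hb")
    case True
    have p: "(x # ys, z) \<in> paths ha x (last (x # ys)) z"
      using Cons.prems z unfolding paths_def by auto
    have lx: "last (x # ys) \<in> nodes ha" using Cons.prems by auto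
    obtain P where P: "P \<subseteq> paths hb x (last (x # ys)) z"
      and le: "\<And>m. epath ha (x # ys, z) m \<le> epaths hb P m"
      using PR[unfolded path_replacement_def, rule_format, OF True lx z p] by blast
    have "ecomp (edge ha) (x # ys) z a = epath ha (x # ys, z) a" by (simp add: epath_def)
    also have "\<dots> \<le> epaths hb P a" by (rule le)
    also have "\<dots> \<le> outflow hb (last (x # ys)) z"
      unfolding epaths_def
    proof (rule FG.isum_le[OF FGb])
      fix q assume "q \<in> P"
      then obtain qs where q: "q = (qs, z)" "qs \<noteq> []" "set qs \<subseteq> nodes hb" "hd qs = x"
        "last qs = last (x # ys)" using P unfolding paths_def by auto
      have "ecomp (edge hb) qs z a \<le> outflow hb (last qs) z"
        using FG.walk_le_outflow[OF FGb q(2,3)] z N Cons.prems q(4) by simp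
      then show "epath hb q a \<le> outflow hb (last (x # ys)) z" using q by (simp add: epath_def)
    qed
    finally show ?thesis .
  next
    case False
    then have e: "edge ha x = edge hb x" using x unfolding Out_def by auto
    show ?thesis
    proof (cases ys)
      case Nil
      have "ecomp (edge hb) [x] z a \<le> outflow hb (last [x]) z"
        using FG.walk_le_outflow[OF FGb, of "[x]" z a] x z N Cons.prems by simp
      then show ?thesis using Nil e by simp
    next
      case (Cons y rest)
      have "edge hb x y a \<le> flow hb y"
        using FG.edge_le_flow[OF FGb, of x y a] Cons.prems \<open>ys = y # rest\<close> N by simp
      then have "ecomp (edge ha) ys z (edge ha x y a) \<le> outflow hb (last ys) z"
        using Cons.IH Cons.prems \<open>ys = y # rest\<close> e by simp
      then show ?thesis using \<open>ys = y # rest\<close> by simp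
    qed
  qed
qed

lemma replace_bound:
  assumes FGa: "FG ha" and FGb: "FG hb" and N: "nodes ha = nodes hb"
    and I: "\<And>x. inflow_at ha x = inflow_at hb x"
    and PR: "path_replacement ha hb" and y: "y \<in> nodes ha" and z: "z \<notin> nodes ha"
  shows "outflow ha y z \<le> outflow hb y z"
proof (rule FG.outflow_upper[OF FGa _ y z])
  fix x ys z' assume a: "x \<in> nodes ha" "ys \<noteq> []" "set ys \<subseteq> nodes ha" "hd ys = x" "z' \<notin> nodes ha"
  have "inflow_at ha x \<le> flow hb (hd ys)"
    using FG.inflow_le_flow[OF FGb, of x] a N I by simp
  then show "ecomp (edge ha) ys z' (inflow_at ha x) \<le> outflow hb (last ys) z'"
    using core[OF FGa FGb N PR a(5) a(2,3)] by simp
qed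

lemma inflow_single:
  assumes FGc: "FG hc" and w0: "w0 \<notin> nodes hc"
  shows "inflow_at (hc\<lparr>inflow := (\<lambda>w x'. if w = w0 \<and> x' = x then m else 0)\<rparr>) x' = (if x' = x then m else 0)"
proof -
  have e: "inflow_at (hc\<lparr>inflow := (\<lambda>w x'. if w = w0 \<and> x' = x then m else 0)\<rparr>) x'
      = isum (\<lambda>w. if w = w0 \<and> x' = x then m else 0) (- nodes hc)"
    by (simp add: inflow_at_def)
  have "isum (\<lambda>w. if w = w0 \<and> x' = x then m else 0) (- nodes hc) \<le> (if x' = x then m else 0)"
    by (rule FG.isum_le[OF FGc]) auto
  moreover have "(if x' = x then m else 0) \<le> isum (\<lambda>w. if w = w0 \<and> x' = x then m else 0) (- nodes hc)"
    using FG.le_isum[OF FGc, of w0 "- nodes hc" "\<lambda>w. if w = w0 \<and> x' = x then m else 0"] w0 by simp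
  ultimately show ?thesis unfolding e by (rule antisym)
qed

lemma tf_to_pr:
  fixes ha hb :: "'a::canonically_ordered_monoid_add flow_graph"
  assumes FGa: "FG ha" and FGb: "FG hb" and N: "nodes ha = nodes hb" and T: "tf ha = tf hb"
  shows "path_replacement ha hb"
  unfolding path_replacement_def
proof (intro ballI allI impI)
  fix x y z p assume x: "x \<in> Out ha hb" and y: "y \<in> nodes ha" and z: "z \<notin> nodes ha"
    and p: "p \<in> paths ha x y z"
  obtain xs where xs: "p = (xs, z)" "xs \<noteq> []" "set xs \<subseteq> nodes ha" "hd xs = x" "last xs = y"
    using p unfolding paths_def by auto
  have xn: "x \<in> nodes ha" using x unfolding Out_def by auto
  have "finite (nodes ha)" using FG.fin_nodes[OF FGa] .
  then obtain w0 where w0: "w0 \<notin> nodes ha" using ex_new_if_finite[OF infinite_UNIV_nat] by blast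
  show "\<exists>P. P \<subseteq> paths hb x y z \<and> (\<forall>m. epath ha p m \<le> epaths hb P m)"
  proof (intro exI conjI allI)
    show "paths hb x y z \<subseteq> paths hb x y z" by simp
    fix m :: 'a
    define inn where "inn = (\<lambda>w x'. if w = w0 \<and> x' = x then m else 0)"
    let ?ha = "ha\<lparr>inflow := inn\<rparr>" and ?hb = "hb\<lparr>inflow := inn\<rparr>"
    have FGa': "FG ?ha" by (rule FG.FG_upd[OF FGa])
    have FGb': "FG ?hb" by (rule FG.FG_upd[OF FGb])
    have ia: "inflow_at ?ha x' = (if x' = x then m else 0)" for x'
      unfolding inn_def by (rule inflow_single[OF FGa w0])
    have ib: "inflow_at ?hb x' = (if x' = x then m else 0)" for x'
      unfolding inn_def by (rule inflow_single[OF FGb]) (use w0 N in simp)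
    have "epath ha p m = ecomp (edge ?ha) xs z (inflow_at ?ha x)"
      using xs ia by (simp add: epath_def)
    also have "\<dots> \<le> outflow ?ha (last xs) z"
      using FG.walk_le_outflow[OF FGa' , of xs z] FG.inflow_le_flow[OF FGa', of x] xs xn z by simp
    also have "\<dots> = outflow ?hb y z" using fun_cong[OF T, of inn] xs by (simp add: tf_def)
    also have "\<dots> \<le> epaths hb (paths hb x y z) m"
    proof (rule FG.outflow_upper[OF FGb', where T = "\<lambda>y' z'. epaths hb (paths hb x y' z') m"])
      show "y \<in> nodes ?hb" "z \<notin> nodes ?hb" using y z N by auto
      fix x' ys z' assume a: "x' \<in> nodes ?hb" "ys \<noteq> []" "set ys \<subseteq> nodes ?hb" "hd ys = x'" "z' \<notin> nodes ?hb"
      show "ecomp (edge ?hb) ys z' (inflow_at ?hb x') \<le> epaths hb (paths hb x (last ys) z') m"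
      proof (cases "x' = x")
        case True
        have "(ys, z') \<in> paths hb x (last ys) z'" using a True unfolding paths_def by auto
        then have "epath hb (ys, z') m \<le> epaths hb (paths hb x (last ys) z') m"
          unfolding epaths_def by (rule FG.le_isum[OF FGb])
        then show ?thesis using True ib by (simp add: epath_def)
      next
        case False
        have "ecomp (edge hb) ys z' 0 = 0"
          using FG.ecomp_dist_h[OF FGb, of ys z'] a by (simp add: dist_zero)
        then show ?thesis using False ib by simp
      qed
    qed
    finally show "epath ha p m \<le> epaths hb (paths hb x y z) m" .
  qed
qed

theorem theorem4:
  fixes h1 h2 :: "'a::canonically_ordered_monoid_add flow_graph"
  assumes fm: "flow_monoid TYPE('a)"
    and idem: "\<And>m::'a. m + m = m"
    and fg1: "is_flow_graph h1" and fg2: "is_flow_graph h2"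
    and same_nodes: "nodes h1 = nodes h2"
    and dist1: "\<forall>x\<in>nodes h1. \<forall>z. fm_distributive (edge h1 x z)"
    and dist2: "\<forall>x\<in>nodes h2. \<forall>z. fm_distributive (edge h2 x z)"
  shows "tf h1 = tf h2 \<longleftrightarrow> path_replacement h1 h2 \<and> path_replacement h2 h1"
proof -
  have F1: "FG h1" unfolding FG_def using fm idem fg1 dist1 by blast
  have F2: "FG h2" unfolding FG_def using fm idem fg2 dist2 by blast
  show ?thesis
  proof
    assume "tf h1 = tf h2"
    then show "path_replacement h1 h2 \<and> path_replacement h2 h1"
      using tf_to_pr[OF F1 F2 same_nodes] tf_to_pr[OF F2 F1 same_nodes[symmetric]] by simp
  next
    assume PR: "path_replacement h1 h2 \<and> path_replacement h2 h1"
    show "tf h1 = tf h2"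
      unfolding tf_def
    proof (intro ext)
      fix inn y z
      let ?h1 = "h1\<lparr>inflow := inn\<rparr>" and ?h2 = "h2\<lparr>inflow := inn\<rparr>"
      have G1: "FG ?h1" by (rule FG.FG_upd[OF F1])
      have G2: "FG ?h2" by (rule FG.FG_upd[OF F2])
      have I: "inflow_at ?h1 x = inflow_at ?h2 x" for x
        using same_nodes by (simp add: inflow_at_def)
      have P12: "path_replacement ?h1 ?h2" and P21: "path_replacement ?h2 ?h1"
        using PR by (simp_all add: pr_upd)
      show "outflow ?h1 y z = outflow ?h2 y z"
      proof (cases "y \<in> nodes h1 \<and> z \<notin> nodes h1")
        case True
        show ?thesis
        proof (rule antisym)
          show "outflow ?h1 y z \<le> outflow ?h2 y z"
            by (rule replace_bound[OF G1 G2 _ I P12]) (use True same_nodes in auto)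
          show "outflow ?h2 y z \<le> outflow ?h1 y z"
            by (rule replace_bound[OF G2 G1 _ I[symmetric] P21]) (use True same_nodes in auto)
        qed
      next
        case False
        then show ?thesis using same_nodes by (auto simp: outflow_def)
      qed
    qed
  qed
qed

end
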